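(* Let $n\ge 2$ and $1\le k<n$. Consider the following class of mechanisms (called Ideal-TFRMs). For every bid vector $b=(b_1,\dots,b_n)\in\mathbb{R}_{\ge 0}^n$ of the $n$ included transactions, ordered so that $b_1\ge b_2\ge\dots\ge b_n$, users $1,\dots,k$ are confirmed and each confirmed user pays the VCG payment $b_{k+1}$ minus a rebate. Rebates are given by a single (anonymous) function $g:\mathbb{R}_{\ge 0}^{n-1}\to\mathbb{R}$ via $$r_i=g(b_1,\dots,b_{i-1},b_{i+1},\dots,b_n),\qquad i=1,\dots,n,$$ and the mechanism is required to satisfy, for every ordered bid vector: $r_i=0$ for all $i\in\{k+1,\dots,n\}$ (included but unconfirmed users receive no rebate) and $r_i\le b_{k+1}$ for all $i\in\{1,\dots,k\}$. Then no such mechanism guarantees a strictly positive worst-case redistribution index; that is, $$e_{\mathsf{wc}}=\inf_{b:\,k\,b_{k+1}\neq 0}\frac{\sum_{i=1}^n r_i}{k\,b_{k+1}}$$ is not strictly positive.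
   Context: The setting models a blockchain block containing $n$ included transactions, each belonging to a distinct user who submits a bid; the $k$ highest bids are confirmed. The total VCG payment collected is $k\,b_{k+1}$. The requirement that $r_i$ depend only on the other users' bids (in sorted order) through a common function $g$ is the characterization of deterministic, anonymous, user-incentive-compatible rebate functions. The worst-case redistribution index is the infimum, over bid vectors with nonzero total VCG payment, of the fraction of that payment returned as rebates. *)

theory Defs
  imports Complex_Main "HOL-Library.Extended_Real"
begin

text \<open>Bid vectors are lists of length n, indexed 0..n-1; user i+1 of the paper is index i.
  An ordered bid vector is nonnegative and sorted in non-increasing order.\<close>
definition ordered_bids :: "nat \<Rightarrow> real list \<Rightarrow> bool" where
  "ordered_bids n b \<longleftrightarrow> length b = n \<and> (\<forall>x\<in>set b. 0 \<le> x) \<and> sorted_wrt (\<ge>) b"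

definition others :: "real list \<Rightarrow> nat \<Rightarrow> real list" where
  "others b i = take i b @ drop (Suc i) b"

definition rebate :: "(real list \<Rightarrow> real) \<Rightarrow> real list \<Rightarrow> nat \<Rightarrow> real" where
  "rebate g b i = g (others b i)"

text \<open>Ideal-TFRM: for every ordered bid vector, unconfirmed users (indices k..n-1) get no rebate,
  and confirmed users (indices 0..k-1) get rebate at most the VCG price b_{k+1} = b ! k.\<close>
definition ideal_tfrm :: "nat \<Rightarrow> nat \<Rightarrow> (real list \<Rightarrow> real) \<Rightarrow> bool" where
  "ideal_tfrm n k g \<longleftrightarrow>
     (\<forall>b. ordered_bids n b \<longrightarrow>
        (\<forall>i\<in>{k..<n}. rebate g b i = 0) \<and> (\<forall>i<k. rebate g b i \<le> b ! k))"

definition e_wc :: "nat \<Rightarrow> nat \<Rightarrow> (real list \<Rightarrow> real) \<Rightarrow> ereal" where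
  "e_wc n k g = (INF b \<in> {b. ordered_bids n b \<and> real k * b ! k \<noteq> 0}.
                   ereal ((\<Sum>i<n. rebate g b i) / (real k * b ! k)))"

end

theory Submission
  imports Defs
begin

lemma others_rep: "i < n \<Longrightarrow> others (replicate n x) i = replicate (n - 1) x"
  unfolding others_def by (simp add: replicate_add[symmetric])

theorem theorem2:
  fixes n k :: nat and g :: "real list \<Rightarrow> real"
  assumes "n \<ge> 2" and "1 \<le> k" and "k < n"
    and "ideal_tfrm n k g"
  shows "\<not> (e_wc n k g > 0)"
proof -
  define b where "b = replicate n (1::real)"
  have ob: "ordered_bids n b" unfolding ordered_bids_def b_def
    by (simp add: sorted_wrt_iff_nth_less)
  have bk: "b ! k = 1" using assms(3) by (simp add: b_def)
  have "rebate g b k = 0" using assms(3,4) ob unfolding ideal_tfrm_def by auto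
  hence g0: "g (replicate (n - 1) 1) = 0"
    using assms(3) by (simp add: rebate_def b_def others_rep)
  have "\<And>i. i < n \<Longrightarrow> rebate g b i = 0"
    using g0 by (simp add: rebate_def b_def others_rep)
  hence s: "(\<Sum>i<n. rebate g b i) = 0" by simp
  have mem: "b \<in> {b. ordered_bids n b \<and> real k * b ! k \<noteq> 0}"
    using ob bk assms(2) by simp
  have "e_wc n k g \<le> ereal ((\<Sum>i<n. rebate g b i) / (real k * b ! k))"
    unfolding e_wc_def by (rule INF_lower[OF mem])
  also have "\<dots> = 0" using s by (simp add: zero_ereal_def)
  finally show ?thesis by simp
qed

end
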